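(* For all names $\vec u,\vec v,\vec w$ (of degrees $\ge1$): $\vec u\dotplus\vec v=\vec u\dotplus\vec w$ if and only if $\vec v=\vec w$, and $\vec v\dotplus\vec u=\vec w\dotplus\vec u$ if and only if $\vec v=\vec w$.
   Context: $\hat N^n$ ($n\ge1$) is the set of names of planar rooted binary trees with $n$ internal vertices: writing a tree as a complete expression (full binary parenthesization, outermost product included) of $x_1\cdots x_{n+1}$, its name $\vec v\in\mathbb N^n$ has $v_i=i$ if at least one left parenthesis stands immediately left of $x_i$, and otherwise $v_i=j$ where the rightmost of the right parentheses immediately following $x_i$ matches a left parenthesis in the run immediately preceding $x_j$. For $\vec v\in\hat N^n,\vec w\in\hat N^m$: $\vec v\nearrow\vec w=(\vec v,n\triangleright w_1,\dots,n\triangleright w_m)$ with $n\triangleright a=a+n$ for $a\neq1$, $n\triangleright1=1$; $\vec v\nwarrow\vec w=(v_1,\dots,v_n,w_1+n,\dots,w_m+n)$. The dendriform addition is the set (grove) $\vec v\dotplus\vec w=\{\vec t\in\hat N^{n+m}:\ \vec v\nearrow\vec w\le\vec t\le\vec v\nwarrow\vec w\}$, with componentwise order. *)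

theory Defs
  imports Main
begin

text \<open>Planar rooted binary trees; leaves are read left to right as x_1, ..., x_(n+1).\<close>
datatype btree = Leaf | Node btree btree

fun internal :: "btree \<Rightarrow> nat" where
  "internal Leaf = 0"
| "internal (Node l r) = Suc (internal l + internal r)"

fun leaves :: "btree \<Rightarrow> nat" where
  "leaves Leaf = 1"
| "leaves (Node l r) = leaves l + leaves r"

text \<open>Matching parenthesis pairs of the complete expression: each internal vertex gives a pair
  (a,b) meaning its left parenthesis stands (in the run) immediately before x_a and its right
  parenthesis (in the run) immediately after x_b. Leaves are numbered starting from k.\<close>
fun parens :: "btree \<Rightarrow> nat \<Rightarrow> (nat \<times> nat) set" where
  "parens Leaf k = {}"
| "parens (Node l r) k =
     insert (k, k + leaves l + leaves r - 1) (parens l k \<union> parens r (k + leaves l))"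

text \<open>The name of a tree: v_i = i if a left parenthesis stands immediately left of x_i;
  otherwise v_i = j where the rightmost right parenthesis following x_i (which closes the
  largest parenthesised sub-expression ending at x_i) matches a left parenthesis before x_j.\<close>
definition tree_name :: "btree \<Rightarrow> nat list" where
  "tree_name t = map (\<lambda>i. if (\<exists>b. (i, b) \<in> parens t 1) then i
                          else Min {a. (a, i) \<in> parens t 1}) [1..<internal t + 1]"

definition names :: "nat \<Rightarrow> nat list set" where
  "names n = {tree_name t | t. internal t = n}"

definition le_name :: "nat list \<Rightarrow> nat list \<Rightarrow> bool" where
  "le_name v w = list_all2 (\<le>) v w"

definition tri :: "nat \<Rightarrow> nat \<Rightarrow> nat" where
  "tri n a = (if a = 1 then 1 else a + n)"

definition nearrow :: "nat list \<Rightarrow> nat list \<Rightarrow> nat list" where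
  "nearrow v w = v @ map (tri (length v)) w"

definition nwarrow :: "nat list \<Rightarrow> nat list \<Rightarrow> nat list" where
  "nwarrow v w = v @ map (\<lambda>a. a + length v) w"

definition dplus :: "nat list \<Rightarrow> nat list \<Rightarrow> nat list set" where
  "dplus v w = {t \<in> names (length v + length w).
                  le_name (nearrow v w) t \<and> le_name t (nwarrow v w)}"

end

theory Submission
  imports Defs
begin

fun graft :: "btree \<Rightarrow> btree \<Rightarrow> btree" where
  "graft Leaf s = s"
| "graft (Node l r) s = Node l (graft r s)"

lemma leaves_pos: "leaves t \<ge> 1"
  by (induction t) auto

lemma leaves_internal: "leaves t = internal t + 1"
  by (induction t) auto

lemma internal_graft: "internal (graft t s) = internal t + internal s"
  by (induction t) auto

lemma leaves_graft: "leaves (graft t s) = leaves t + leaves s - 1"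
  by (simp add: leaves_internal internal_graft)

lemma parens_range: "(a,b) \<in> parens t k \<Longrightarrow> k \<le> a \<and> a < b \<and> b \<le> k + leaves t - 1"
proof (induction t arbitrary: k)
  case Leaf then show ?case by simp
next
  case (Node l r)
  have l1: "leaves l \<ge> 1" "leaves r \<ge> 1" using leaves_pos by auto
  from Node.prems show ?case
    using Node.IH[of k] Node.IH(2)[of "k + leaves l"] l1 by auto
qed

lemma parens_finite: "finite (parens t k)"
  by (induction t arbitrary: k) auto

lemma parens_shift: "parens s (k + d) = (\<lambda>(a,b). (a+d, b+d)) ` parens s k"
proof (induction s arbitrary: k)
  case Leaf then show ?case by simp
next
  case (Node l r)
  have l1: "leaves l \<ge> 1" "leaves r \<ge> 1" using leaves_pos by auto
  have e: "k + d + leaves l = (k + leaves l) + d" by simp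
  have e2: "k + leaves l + d + leaves r - Suc 0 = k + leaves l + leaves r + d - Suc 0" by simp
  show ?case using l1 by (simp add: Node.IH e e2 image_Un)
qed

lemma parens_cover:
  "k \<le> j \<Longrightarrow> j < k + leaves t \<Longrightarrow> t \<noteq> Leaf \<Longrightarrow>
   (\<exists>b. (j,b) \<in> parens t k) \<or> (\<exists>a. (a,j) \<in> parens t k)"
proof (induction t arbitrary: k)
  case Leaf then show ?case by simp
next
  case (Node l r)
  have l1: "leaves l \<ge> 1" "leaves r \<ge> 1" using leaves_pos by auto
  show ?case
  proof (cases "j < k + leaves l")
    case True
    show ?thesis
    proof (cases "l = Leaf")
      case True
      with \<open>j < k + leaves l\<close> Node.prems have "j = k" by simp
      then show ?thesis by auto
    next
      case False
      then show ?thesis using Node.IH(1)[of k] True Node.prems by auto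
    qed
  next
    case False
    show ?thesis
    proof (cases "r = Leaf")
      case True
      with False Node.prems have "j = k + leaves l + leaves r - 1" by simp
      then show ?thesis by auto
    next
      case rL: False
      then show ?thesis using Node.IH(2)[of "k + leaves l"] False Node.prems by auto
    qed
  qed
qed

definition fix_end :: "nat \<Rightarrow> nat \<Rightarrow> nat \<Rightarrow> nat" where
  "fix_end e e' b = (if b = e then e' else b)"

lemma parens_graft:
  "parens (graft t s) k =
     (\<lambda>(a,b). (a, fix_end (k + leaves t - 1) (k + leaves t + leaves s - 2) b)) ` parens t k
     \<union> parens s (k + leaves t - 1)"
proof (induction t arbitrary: k)
  case Leaf then show ?case by simp
next
  case (Node l r)
  have l1: "leaves l \<ge> 1" "leaves r \<ge> 1" "leaves s \<ge> 1" using leaves_pos by auto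
  let ?f = "\<lambda>(a,b). (a, fix_end (k + leaves (Node l r) - 1) (k + leaves (Node l r) + leaves s - 2) b)"
  have A: "?f ` parens l k = parens l k"
  proof -
    have "?f p = p" if "p \<in> parens l k" for p
      using that parens_range[of "fst p" "snd p" l k] l1
      by (cases p) (auto simp: fix_end_def)
    then show ?thesis by (simp add: image_cong)
  qed
  let ?g = "\<lambda>(a,b). (a, fix_end (k + leaves l + leaves r - 1) (k + leaves l + leaves r + leaves s - 2) b)"
  have F: "?f = ?g" by (simp add: add.assoc)
  have C: "?f (k, k + leaves l + leaves r - 1) = (k, k + leaves l + leaves (graft r s) - 1)"
    using l1 unfolding fix_end_def leaves_graft by (simp add: add.assoc)
  have "parens (graft (Node l r) s) k = insert (k, k + leaves l + leaves (graft r s) - 1) (parens l k \<union> parens (graft r s) (k + leaves l))"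
    by simp
  also have "\<dots> = insert (?f (k, k + leaves l + leaves r - 1)) (?f ` parens l k \<union> (?g ` parens r (k + leaves l) \<union> parens s (k + leaves l + leaves r - 1)))"
    unfolding Node.IH C A ..
  also have "\<dots> = ?f ` parens (Node l r) k \<union> parens s (k + leaves (Node l r) - 1)"
    unfolding F by (simp add: image_Un Un_assoc add.assoc)
  finally show ?case .
qed

definition nm :: "btree \<Rightarrow> nat \<Rightarrow> nat" where
  "nm t i = (if (\<exists>b. (i, b) \<in> parens t 1) then i else Min {a. (a, i) \<in> parens t 1})"

lemma tree_name_nm: "tree_name t = map (nm t) [1..<internal t + 1]"
  unfolding tree_name_def nm_def by simp

lemma nm_graft_left:
  assumes "1 \<le> i" "i \<le> internal t"
  shows "nm (graft t s) i = nm t i"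
proof -
  let ?n = "internal t"
  have lt: "leaves t = ?n + 1" by (simp add: leaves_internal)
  have ls: "leaves s \<ge> 1" using leaves_pos by auto
  have P: "parens (graft t s) 1 =
     (\<lambda>(a,b). (a, fix_end (?n + 1) (?n + leaves s) b)) ` parens t 1 \<union> parens s (?n + 1)"
    using parens_graft[of t s 1] lt ls by simp
  have s_range: "(a,b) \<in> parens s (?n+1) \<Longrightarrow> a \<ge> ?n + 1 \<and> b \<ge> ?n + 1" for a b
    using parens_range[of a b s "?n+1"] by auto
  have E1: "(\<exists>b. (i, b) \<in> parens (graft t s) 1) \<longleftrightarrow> (\<exists>b. (i, b) \<in> parens t 1)"
    unfolding P using s_range assms by force
  have E2: "{a. (a, i) \<in> parens (graft t s) 1} = {a. (a, i) \<in> parens t 1}"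
  proof -
    have "(a, i) \<in> parens (graft t s) 1 \<longleftrightarrow> (a, i) \<in> parens t 1" for a
    proof
      assume "(a, i) \<in> parens (graft t s) 1"
      then consider b' where "(a,b') \<in> parens t 1" "i = fix_end (?n + 1) (?n + leaves s) b'"
        | "(a,i) \<in> parens s (?n+1)" unfolding P by auto
      then show "(a, i) \<in> parens t 1"
      proof cases
        case 1 then show ?thesis using assms ls by (auto simp: fix_end_def split: if_splits)
      next
        case 2 then show ?thesis using s_range assms by force
      qed
    next
      assume "(a, i) \<in> parens t 1"
      moreover have "fix_end (?n + 1) (?n + leaves s) i = i" using assms by (simp add: fix_end_def)
      ultimately show "(a, i) \<in> parens (graft t s) 1" unfolding P by force
    qed
    then show ?thesis by blast
  qed
  show ?thesis unfolding nm_def E1 E2 ..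
qed

lemma nm_graft_right:
  assumes "1 \<le> j" "j \<le> internal s"
  shows "nm (graft t s) (internal t + j) = nm s j + internal t"
proof -
  let ?n = "internal t"
  let ?m = "internal s"
  have lt: "leaves t = ?n + 1" by (simp add: leaves_internal)
  have ls: "leaves s = ?m + 1" by (simp add: leaves_internal)
  have P: "parens (graft t s) 1 =
     (\<lambda>(a,b). (a, fix_end (?n + 1) (?n + ?m + 1) b)) ` parens t 1 \<union> parens s (1 + ?n)"
    using parens_graft[of t s 1] lt ls by (simp add: add.commute)
  have Sh: "parens s (1 + ?n) = (\<lambda>(a,b). (a + ?n, b + ?n)) ` parens s 1"
    by (rule parens_shift)
  have t_range: "(a,b) \<in> parens t 1 \<Longrightarrow> a \<le> ?n \<and> b \<le> ?n + 1" for a b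
    using parens_range[of a b t 1] lt by auto
  have E1: "(\<exists>b. (?n + j, b) \<in> parens (graft t s) 1) \<longleftrightarrow> (\<exists>b. (j, b) \<in> parens s 1)"
  proof
    assume "\<exists>b. (?n + j, b) \<in> parens (graft t s) 1"
    then obtain b where "(?n + j, b) \<in> parens (graft t s) 1" by blast
    then show "\<exists>b. (j, b) \<in> parens s 1" unfolding P Sh using t_range assms by force
  next
    assume "\<exists>b. (j, b) \<in> parens s 1"
    then obtain b where "(j, b) \<in> parens s 1" by blast
    then have "(?n + j, b + ?n) \<in> parens s (1 + ?n)" unfolding Sh by force
    then show "\<exists>b. (?n + j, b) \<in> parens (graft t s) 1" unfolding P by blast
  qed
  have E2: "{a. (a, ?n + j) \<in> parens (graft t s) 1} = (\<lambda>a. a + ?n) ` {a. (a, j) \<in> parens s 1}"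
  proof -
    have "(a, ?n + j) \<in> parens (graft t s) 1 \<longleftrightarrow> (\<exists>a'. a = a' + ?n \<and> (a', j) \<in> parens s 1)" for a
    proof
      assume "(a, ?n + j) \<in> parens (graft t s) 1"
      then consider b' where "(a,b') \<in> parens t 1" "?n + j = fix_end (?n + 1) (?n + ?m + 1) b'"
        | "(a, ?n + j) \<in> parens s (1 + ?n)" unfolding P by auto
      then show "\<exists>a'. a = a' + ?n \<and> (a', j) \<in> parens s 1"
      proof cases
        case 1 then show ?thesis using assms t_range[of a b'] by (auto simp: fix_end_def split: if_splits)
      next
        case 2 then show ?thesis unfolding Sh by force
      qed
    next
      assume "\<exists>a'. a = a' + ?n \<and> (a', j) \<in> parens s 1"
      then obtain a' where "a = a' + ?n" "(a', j) \<in> parens s 1" by blast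
      then have "(a, ?n + j) \<in> parens s (1 + ?n)" unfolding Sh by force
      then show "(a, ?n + j) \<in> parens (graft t s) 1" unfolding P by blast
    qed
    then show ?thesis by auto
  qed
  show ?thesis
  proof (cases "\<exists>b. (j, b) \<in> parens s 1")
    case True
    then show ?thesis unfolding nm_def using E1 by simp
  next
    case False
    have sL: "s \<noteq> Leaf" using assms by auto
    have ne: "{a. (a, j) \<in> parens s 1} \<noteq> {}"
      using parens_cover[of 1 j s] False assms ls sL by auto
    have fin: "finite {a. (a, j) \<in> parens s 1}"
    proof -
      have "{a. (a, j) \<in> parens s 1} \<subseteq> fst ` parens s 1" by force
      then show ?thesis using parens_finite finite_subset by blast
    qed
    have "Min ((\<lambda>a. a + ?n) ` {a. (a, j) \<in> parens s 1}) = Min {a. (a, j) \<in> parens s 1} + ?n"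
      using mono_Min_commute[of "\<lambda>a. a + ?n", OF _ fin ne] by (simp add: mono_def)
    then show ?thesis unfolding nm_def using E1 E2 False by simp
  qed
qed

lemma tree_name_graft:
  "tree_name (graft t s) = tree_name t @ map (\<lambda>a. a + internal t) (tree_name s)"
proof -
  let ?n = "internal t"
  let ?m = "internal s"
  have split: "[1..<?n + ?m + 1] = [1..<?n + 1] @ map (\<lambda>j. ?n + j) [1..<?m + 1]"
    by (rule nth_equalityI) (auto simp: nth_append)
  have "tree_name (graft t s) = map (nm (graft t s)) [1..<?n + ?m + 1]"
    by (simp add: tree_name_nm internal_graft)
  also have "\<dots> = map (nm (graft t s)) [1..<?n + 1] @ map (\<lambda>j. nm (graft t s) (?n + j)) [1..<?m + 1]"
    unfolding split by simp
  also have "map (nm (graft t s)) [1..<?n + 1] = map (nm t) [1..<?n + 1]"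
    by (rule map_cong) (auto simp: nm_graft_left)
  also have "map (\<lambda>j. nm (graft t s) (?n + j)) [1..<?m + 1] = map (\<lambda>j. nm s j + ?n) [1..<?m + 1]"
    by (rule map_cong) (auto simp: nm_graft_right)
  finally show ?thesis by (simp add: tree_name_nm)
qed

lemma length_names: "x \<in> names a \<Longrightarrow> length x = a"
  by (auto simp: names_def tree_name_def)

lemma nwarrow_in_dplus:
  assumes "x \<in> names a" "y \<in> names b"
  shows "nwarrow x y \<in> dplus x y"
proof -
  obtain t where t: "x = tree_name t" "internal t = a" using assms(1) by (auto simp: names_def)
  obtain s where s: "y = tree_name s" "internal s = b" using assms(2) by (auto simp: names_def)
  have lx: "length x = internal t" using t by (simp add: tree_name_def)
  have "nwarrow x y = tree_name (graft t s)"
    unfolding nwarrow_def lx unfolding t(1) s(1) by (simp add: tree_name_graft)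
  moreover have "internal (graft t s) = length x + length y"
    using length_names[OF assms(1)] length_names[OF assms(2)] t s by (simp add: internal_graft)
  ultimately have N: "nwarrow x y \<in> names (length x + length y)"
    unfolding names_def by blast
  have L1: "le_name (nearrow x y) (nwarrow x y)"
    unfolding le_name_def nearrow_def nwarrow_def
    by (auto simp: list_all2_conv_all_nth nth_append tri_def)
  have L2: "le_name (nwarrow x y) (nwarrow x y)"
    unfolding le_name_def by (simp add: list_all2_refl)
  show ?thesis unfolding dplus_def using N L1 L2 by blast
qed

lemma le_name_antisym: "le_name x y \<Longrightarrow> le_name y x \<Longrightarrow> x = y"
  unfolding le_name_def by (auto simp: list_all2_conv_all_nth intro!: nth_equalityI intro: order.antisym)

lemma dplus_eq:
  assumes "x \<in> names a" "y \<in> names b" "x' \<in> names a'" "y' \<in> names b'"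
    and "dplus x y = dplus x' y'"
  shows "nwarrow x y = nwarrow x' y'"
proof -
  have 1: "nwarrow x y \<in> dplus x' y'" using nwarrow_in_dplus[OF assms(1,2)] assms(5) by simp
  have 2: "nwarrow x' y' \<in> dplus x y" using nwarrow_in_dplus[OF assms(3,4)] assms(5) by simp
  have "le_name (nwarrow x y) (nwarrow x' y')" using 1 by (simp add: dplus_def)
  moreover have "le_name (nwarrow x' y') (nwarrow x y)" using 2 by (simp add: dplus_def)
  ultimately show ?thesis by (rule le_name_antisym)
qed

theorem mainTheorem14:
  fixes u v w :: "nat list" and n m k :: nat
  assumes "n \<ge> 1" "m \<ge> 1" "k \<ge> 1"
    and "u \<in> names n" "v \<in> names m" "w \<in> names k"
  shows "(dplus u v = dplus u w \<longleftrightarrow> v = w) \<and> (dplus v u = dplus w u \<longleftrightarrow> v = w)"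
proof
  show "dplus u v = dplus u w \<longleftrightarrow> v = w"
  proof
    assume "dplus u v = dplus u w"
    then have "nwarrow u v = nwarrow u w" using dplus_eq assms(4,5,4,6) by blast
    then show "v = w" unfolding nwarrow_def by (auto intro: inj_onI simp: inj_map_eq_map)
  qed simp
  show "dplus v u = dplus w u \<longleftrightarrow> v = w"
  proof
    assume "dplus v u = dplus w u"
    then have e: "nwarrow v u = nwarrow w u" using dplus_eq assms(5,4,6,4) by blast
    then have "length v = length w" unfolding nwarrow_def by (metis length_append length_map add_right_cancel)
    then show "v = w" using e unfolding nwarrow_def by simp
  qed simp
qed

end
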